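(* Let $M$ be a finite-dimensional complex representation of a finite quiver $Q$ with ordered basis $\mathcal B$, $\underline e$ a dimension vector and $\beta\subseteq\mathcal B$ of type $\underline e$. If $\beta$ is not extremal successor closed, then the Schubert cell $C_\beta^M$ is empty.
   Context: $\mathcal B=\bigcup_p\mathcal B_p$ is a union of bases of the $M_p$, linearly ordered. $\beta$ is of type $\underline e$ if $|\beta\cap\mathcal B_p|=e_p$ for all $p$. $\mathrm{Gr}_{\underline e}(M)$ is the variety of subrepresentations of dimension vector $\underline e$. For $e$-subsets $I=\{i_1<\dots<i_e\}$, $J=\{j_1<\dots<j_e\}$, $I\le J$ means $i_l\le j_l$ for all $l$. $C_\beta^M$ is the set of $N\in\mathrm{Gr}_{\underline e}(M)$ such that for each $p$ the Plücker coordinates w.r.t. $\mathcal B_p$ satisfy $\Delta_{\beta_p}(N_p)\ne0$ and $\Delta_J(N_p)=0$ for all $J>\beta_p$, where $\beta_p=\beta\cap\mathcal B_p$. Coefficient quiver $T=\Gamma(M,\mathcal B)$: vertices $T_0=\mathcal B$; for $\bar\alpha\in Q_1$, $b\in\mathcal B_{s(\bar\alpha)}$, $c\in\mathcal B_{t(\bar\alpha)}$ there is an arrow $b\to c$ (of colour $\bar\alpha$) iff the coefficient of $c$ in $M_{\bar\alpha}(b)$ is nonzero; $F:T\to Q$ maps $b\in\mathcal B_p$ to $p$ and an arrow of colour $\bar\alpha$ to $\bar\alpha$. An arrow $\alpha:s\to t$ of $T$ is extremal if every other arrow $\alpha':s'\to t'$ of $T$ with $F(\alpha')=F(\alpha)$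 satisfies $s<s'$ or $t'<t$. A subset $\beta\subseteq T_0$ is extremal successor closed if for every extremal arrow $\alpha:s\to t$ of $T$, either $s\notin\beta$ or $t\in\beta$. *)

theory Defs
  imports Complex_Main "Jordan_Normal_Form.Determinant"
begin

text \<open>
A finite-dimensional complex representation M with ordered basis
is given by a finite set B of basis vectors (linearly ordered by the type class linorder),
a map vtx sending each basis vector b to the vertex p with b in B_p, and the structure
coefficients coef a b c = coefficient of c in M_a(b) (for b in B_(s a), c in B_(t a)).
The space M_p is the space of complex functions on B supported on B_p.
\<close>

definition Bp :: "'b set \<Rightarrow> ('b \<Rightarrow> 'v) \<Rightarrow> 'v \<Rightarrow> 'b set" where
  "Bp B vtx p = {b \<in> B. vtx b = p}"

definition rep_map :: "'b set \<Rightarrow> ('b \<Rightarrow> 'v) \<Rightarrow> ('a \<Rightarrow> 'v) \<Rightarrow> ('a \<Rightarrow> 'v)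
    \<Rightarrow> ('a \<Rightarrow> 'b \<Rightarrow> 'b \<Rightarrow> complex) \<Rightarrow> 'a \<Rightarrow> ('b \<Rightarrow> complex) \<Rightarrow> ('b \<Rightarrow> complex)" where
  "rep_map B vtx s t coef a f =
     (\<lambda>c. if c \<in> Bp B vtx (t a) then (\<Sum>b\<in>Bp B vtx (s a). coef a b c * f b) else 0)"

definition is_basis_of :: "'b set \<Rightarrow> ('b \<Rightarrow> 'v) \<Rightarrow> 'v \<Rightarrow> nat \<Rightarrow> ('b \<Rightarrow> complex) set
    \<Rightarrow> (nat \<Rightarrow> 'b \<Rightarrow> complex) \<Rightarrow> bool" where
  "is_basis_of B vtx p d U V \<longleftrightarrow>
     (\<forall>i<d. \<forall>b. b \<notin> Bp B vtx p \<longrightarrow> V i b = 0) \<and>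
     (\<forall>c :: nat \<Rightarrow> complex. (\<lambda>b. \<Sum>i<d. c i * V i b) = (\<lambda>b. 0) \<longrightarrow> (\<forall>i<d. c i = 0)) \<and>
     U = {(\<lambda>b. \<Sum>i<d. c i * V i b) | c :: nat \<Rightarrow> complex. True}"

definition quiver_grassmannian :: "'v set \<Rightarrow> 'a set \<Rightarrow> ('a \<Rightarrow> 'v) \<Rightarrow> ('a \<Rightarrow> 'v) \<Rightarrow> 'b set
    \<Rightarrow> ('b \<Rightarrow> 'v) \<Rightarrow> ('a \<Rightarrow> 'b \<Rightarrow> 'b \<Rightarrow> complex) \<Rightarrow> ('v \<Rightarrow> nat)
    \<Rightarrow> ('v \<Rightarrow> ('b \<Rightarrow> complex) set) set" where
  "quiver_grassmannian Q0 Q1 s t B vtx coef e =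
     {N. (\<forall>p\<in>Q0. \<exists>V. is_basis_of B vtx p (e p) (N p) V) \<and>
         (\<forall>a\<in>Q1. \<forall>f\<in>N (s a). rep_map B vtx s t coef a f \<in> N (t a))}"

text \<open>Pluecker coordinate Delta_J(N_p) w.r.t. the basis B_p (computed from a chosen basis
of N_p; its vanishing does not depend on that choice). Rows: basis of N_p, columns: J in increasing order.\<close>
definition plucker :: "'b::linorder set \<Rightarrow> ('b \<Rightarrow> 'v) \<Rightarrow> ('v \<Rightarrow> nat) \<Rightarrow> ('v \<Rightarrow> ('b \<Rightarrow> complex) set)
    \<Rightarrow> 'v \<Rightarrow> 'b set \<Rightarrow> complex" where
  "plucker B vtx e N p J =
     (let V = (SOME V. is_basis_of B vtx p (e p) (N p) V)
      in det (mat (e p) (e p) (\<lambda>(i, k). V i (sorted_list_of_set J ! k))))"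

definition subset_le :: "'b::linorder set \<Rightarrow> 'b set \<Rightarrow> bool" where
  "subset_le I J \<longleftrightarrow> card I = card J \<and>
     (\<forall>l<card I. sorted_list_of_set I ! l \<le> sorted_list_of_set J ! l)"

definition of_type :: "'v set \<Rightarrow> 'b set \<Rightarrow> ('b \<Rightarrow> 'v) \<Rightarrow> ('v \<Rightarrow> nat) \<Rightarrow> 'b set \<Rightarrow> bool" where
  "of_type Q0 B vtx e \<beta> \<longleftrightarrow> \<beta> \<subseteq> B \<and> (\<forall>p\<in>Q0. card (\<beta> \<inter> Bp B vtx p) = e p)"

definition schubert_cell :: "'v set \<Rightarrow> 'a set \<Rightarrow> ('a \<Rightarrow> 'v) \<Rightarrow> ('a \<Rightarrow> 'v) \<Rightarrow> 'b::linorder set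
    \<Rightarrow> ('b \<Rightarrow> 'v) \<Rightarrow> ('a \<Rightarrow> 'b \<Rightarrow> 'b \<Rightarrow> complex) \<Rightarrow> ('v \<Rightarrow> nat) \<Rightarrow> 'b set
    \<Rightarrow> ('v \<Rightarrow> ('b \<Rightarrow> complex) set) set" where
  "schubert_cell Q0 Q1 s t B vtx coef e \<beta> =
     {N \<in> quiver_grassmannian Q0 Q1 s t B vtx coef e.
        \<forall>p\<in>Q0. plucker B vtx e N p (\<beta> \<inter> Bp B vtx p) \<noteq> 0 \<and>
          (\<forall>J. J \<subseteq> Bp B vtx p \<and> card J = e p \<and>
               subset_le (\<beta> \<inter> Bp B vtx p) J \<and> J \<noteq> \<beta> \<inter> Bp B vtx p
               \<longrightarrow> plucker B vtx e N p J = 0)}"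

text \<open>arrows of the coefficient quiver T = Gamma(M,B): triples (b, a, c) = arrow b -> c of colour a\<close>
definition coeff_quiver_arrows :: "'a set \<Rightarrow> ('a \<Rightarrow> 'v) \<Rightarrow> ('a \<Rightarrow> 'v) \<Rightarrow> 'b set \<Rightarrow> ('b \<Rightarrow> 'v)
    \<Rightarrow> ('a \<Rightarrow> 'b \<Rightarrow> 'b \<Rightarrow> complex) \<Rightarrow> ('b \<times> 'a \<times> 'b) set" where
  "coeff_quiver_arrows Q1 s t B vtx coef =
     {(b, a, c). a \<in> Q1 \<and> b \<in> Bp B vtx (s a) \<and> c \<in> Bp B vtx (t a) \<and> coef a b c \<noteq> 0}"

definition extremal_arrow :: "'a set \<Rightarrow> ('a \<Rightarrow> 'v) \<Rightarrow> ('a \<Rightarrow> 'v) \<Rightarrow> 'b::linorder set \<Rightarrow> ('b \<Rightarrow> 'v)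
    \<Rightarrow> ('a \<Rightarrow> 'b \<Rightarrow> 'b \<Rightarrow> complex) \<Rightarrow> 'b \<times> 'a \<times> 'b \<Rightarrow> bool" where
  "extremal_arrow Q1 s t B vtx coef \<alpha> \<longleftrightarrow>
     \<alpha> \<in> coeff_quiver_arrows Q1 s t B vtx coef \<and>
     (\<forall>\<alpha>' \<in> coeff_quiver_arrows Q1 s t B vtx coef.
        \<alpha>' \<noteq> \<alpha> \<and> fst (snd \<alpha>') = fst (snd \<alpha>) \<longrightarrow>
          fst \<alpha> < fst \<alpha>' \<or> snd (snd \<alpha>') < snd (snd \<alpha>))"

definition ext_succ_closed :: "'a set \<Rightarrow> ('a \<Rightarrow> 'v) \<Rightarrow> ('a \<Rightarrow> 'v) \<Rightarrow> 'b::linorder set \<Rightarrow> ('b \<Rightarrow> 'v)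
    \<Rightarrow> ('a \<Rightarrow> 'b \<Rightarrow> 'b \<Rightarrow> complex) \<Rightarrow> 'b set \<Rightarrow> bool" where
  "ext_succ_closed Q1 s t B vtx coef \<beta> \<longleftrightarrow>
     (\<forall>\<alpha>. extremal_arrow Q1 s t B vtx coef \<alpha> \<longrightarrow> fst \<alpha> \<notin> \<beta> \<or> snd (snd \<alpha>) \<in> \<beta>)"

end

theory Submission imports Defs begin

lemma kernel_lemma:
  assumes bas: "is_basis_of B vtx p d U V" and len: "length L \<le> d"
  shows "det (mat d d (\<lambda>(i,k). if k < length L then V i (L!k) else 0)) = 0 \<longleftrightarrow>
         (\<exists>u\<in>U. u \<noteq> (\<lambda>b. 0) \<and> (\<forall>k<length L. u (L!k) = 0))"
proof -
  define A where "A = mat d d (\<lambda>(i,k). if k < length L then V i (L!k) else 0)"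
  have A: "A \<in> carrier_mat d d" unfolding A_def by simp
  have AT: "A\<^sup>T \<in> carrier_mat d d" using A by simp
  have comp: "(A\<^sup>T *\<^sub>v v) $ k = (if k < length L then (\<Sum>i<d. v$i * V i (L!k)) else 0)"
    if "v \<in> carrier_vec d" "k < d" for v k
    using that unfolding A_def
    by (auto simp: scalar_prod_def lessThan_atLeast0 intro!: sum.cong)
  have eq0: "(A\<^sup>T *\<^sub>v v = 0\<^sub>v d) \<longleftrightarrow> (\<forall>k<length L. (\<Sum>i<d. v$i * V i (L!k)) = 0)"
    if v: "v \<in> carrier_vec d" for v
  proof
    assume "A\<^sup>T *\<^sub>v v = 0\<^sub>v d"
    then show "\<forall>k<length L. (\<Sum>i<d. v$i * V i (L!k)) = 0"
      using comp[OF v] len by (metis index_zero_vec(1) less_le_trans)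
  next
    assume h: "\<forall>k<length L. (\<Sum>i<d. v$i * V i (L!k)) = 0"
    show "A\<^sup>T *\<^sub>v v = 0\<^sub>v d"
      by (rule eq_vecI) (use comp[OF v] h AT in auto)
  qed
  from bas have indep: "\<And>c. (\<lambda>b. \<Sum>i<d. c i * V i b) = (\<lambda>b. 0) \<Longrightarrow> (\<forall>i<d. c i = 0)"
    and Ueq: "U = {(\<lambda>b. \<Sum>i<d. c i * V i b) | c. True}"
    unfolding is_basis_of_def by auto
  have "det A = det A\<^sup>T" using det_transpose[OF A] by simp
  also have "\<dots> = 0 \<longleftrightarrow> (\<exists>v. v \<in> carrier_vec d \<and> v \<noteq> 0\<^sub>v d \<and> A\<^sup>T *\<^sub>v v = 0\<^sub>v d)"
    by (rule det_0_iff_vec_prod_zero_field[OF AT])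
  finally have "det A = 0 \<longleftrightarrow> (\<exists>v. v \<in> carrier_vec d \<and> v \<noteq> 0\<^sub>v d \<and> (\<forall>k<length L. (\<Sum>i<d. v$i * V i (L!k)) = 0))"
    using eq0 by blast
  also have "\<dots> \<longleftrightarrow> (\<exists>u\<in>U. u \<noteq> (\<lambda>b. 0) \<and> (\<forall>k<length L. u (L!k) = 0))"
  proof
    assume "\<exists>v. v \<in> carrier_vec d \<and> v \<noteq> 0\<^sub>v d \<and> (\<forall>k<length L. (\<Sum>i<d. v$i * V i (L!k)) = 0)"
    then obtain v where v: "v \<in> carrier_vec d" "v \<noteq> 0\<^sub>v d" "\<forall>k<length L. (\<Sum>i<d. v$i * V i (L!k)) = 0" by blast
    define u where "u = (\<lambda>b. \<Sum>i<d. (\<lambda>i. v$i) i * V i b)"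
    have "u \<in> U" unfolding Ueq u_def by blast
    moreover have "u \<noteq> (\<lambda>b. 0)"
    proof
      assume "u = (\<lambda>b. 0)"
      then have "\<forall>i<d. v$i = 0" using indep[of "\<lambda>i. v$i"] unfolding u_def by blast
      then have "v = 0\<^sub>v d" using v(1) by (intro eq_vecI) auto
      with v(2) show False by simp
    qed
    moreover have "\<forall>k<length L. u (L!k) = 0" using v(3) unfolding u_def by simp
    ultimately show "\<exists>u\<in>U. u \<noteq> (\<lambda>b. 0) \<and> (\<forall>k<length L. u (L!k) = 0)" by blast
  next
    assume "\<exists>u\<in>U. u \<noteq> (\<lambda>b. 0) \<and> (\<forall>k<length L. u (L!k) = 0)"
    then obtain u where u: "u \<in> U" "u \<noteq> (\<lambda>b. 0)" "\<forall>k<length L. u (L!k) = 0" by blast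
    from u(1) obtain c where uc: "u = (\<lambda>b. \<Sum>i<d. c i * V i b)" unfolding Ueq by blast
    define v where "v = vec d c"
    have v1: "v \<in> carrier_vec d" unfolding v_def by simp
    have vs: "(\<Sum>i<d. v$i * V i b) = u b" for b unfolding v_def uc by (auto intro!: sum.cong)
    have "v \<noteq> 0\<^sub>v d"
    proof
      assume "v = 0\<^sub>v d"
      then have "\<And>b. u b = 0" using vs by simp
      with u(2) show False by auto
    qed
    with v1 vs u(3) show "\<exists>v. v \<in> carrier_vec d \<and> v \<noteq> 0\<^sub>v d \<and> (\<forall>k<length L. (\<Sum>i<d. v$i * V i (L!k)) = 0)"
      by metis
  qed
  finally show ?thesis unfolding A_def .
qed


lemma rank_sorted:
  fixes S :: "'b::linorder set"
  assumes "finite S" "l < card S"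
  shows "card {z\<in>S. z < sorted_list_of_set S ! l} = l"
proof -
  define xs where "xs = sorted_list_of_set S"
  have sw: "sorted_wrt (<) xs" unfolding xs_def by simp
  have dis: "distinct xs" unfolding xs_def by simp
  have len: "length xs = card S" unfolding xs_def by simp
  have set: "set xs = S" unfolding xs_def using assms by simp
  have "{z\<in>S. z < xs ! l} = (\<lambda>i. xs ! i) ` {..<l}"
  proof (intro equalityI subsetI)
    fix z assume "z \<in> {z\<in>S. z < xs ! l}"
    then have z: "z \<in> set xs" "z < xs ! l" using set by auto
    then obtain i where i: "i < length xs" "z = xs ! i" by (auto simp: in_set_conv_nth)
    have "i < l"
    proof (rule ccontr)
      assume "\<not> i < l"
      then have "l = i \<or> l < i" by auto
      then have "xs ! l \<le> xs ! i" using sw i(1) by (auto simp: sorted_wrt_iff_nth_less less_imp_le)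
      with z i show False by auto
    qed
    with i show "z \<in> (\<lambda>i. xs ! i) ` {..<l}" by auto
  next
    fix z assume "z \<in> (\<lambda>i. xs ! i) ` {..<l}"
    then obtain i where i: "i < l" "z = xs ! i" by auto
    then show "z \<in> {z\<in>S. z < xs ! l}" using sw assms len set
      by (auto simp: sorted_wrt_iff_nth_less)
  qed
  moreover have "inj_on (\<lambda>i. xs ! i) {..<l}"
    using dis assms len by (auto simp: inj_on_def nth_eq_iff_index_eq)
  ultimately show ?thesis unfolding xs_def[symmetric] by (simp add: card_image)
qed

lemma le_sorted_count:
  fixes S :: "'b::linorder set"
  assumes "finite S" "l < card S"
  shows "card {z\<in>S. z \<le> sorted_list_of_set S ! l} = Suc l"
proof -
  have mem: "sorted_list_of_set S ! l \<in> S"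
    using assms by (metis length_sorted_list_of_set nth_mem set_sorted_list_of_set)
  have "{z\<in>S. z \<le> sorted_list_of_set S ! l} = insert (sorted_list_of_set S ! l) {z\<in>S. z < sorted_list_of_set S ! l}"
    using mem by auto
  then show ?thesis using rank_sorted[OF assms] assms(1) by simp
qed

lemma card_swap:
  assumes "finite A" "j \<in> A" "c \<notin> A"
  shows "card (insert c (A - {j})) = card A"
proof -
  have "card (insert c (A - {j})) = Suc (card (A - {j}))" using assms by simp
  also have "\<dots> = card A" using assms card_Suc_Diff1 by metis
  finally show ?thesis .
qed

lemma subset_le_swap:
  fixes I :: "'b::linorder set"
  assumes fin: "finite I" and j: "j \<in> I" and c: "c \<notin> I" and jc: "j < c"
  shows "subset_le I (insert c (I - {j}))"
proof -
  define K where "K = insert c (I - {j})"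
  have finK: "finite K" unfolding K_def using fin by simp
  have cardK: "card K = card I" unfolding K_def using fin j c
    by (rule card_swap)
  have Kd: "z \<in> K \<longleftrightarrow> z = c \<or> (z \<in> I \<and> z \<noteq> j)" for z unfolding K_def by auto
  have "sorted_list_of_set I ! l \<le> sorted_list_of_set K ! l" if l: "l < card I" for l
  proof (rule ccontr)
    let ?x = "sorted_list_of_set I ! l" and ?y = "sorted_list_of_set K ! l"
    assume "\<not> ?x \<le> ?y"
    then have yx: "?y < ?x" by simp
    have c1: "card {z\<in>K. z \<le> ?y} = Suc l" using le_sorted_count[OF finK] l cardK by simp
    have c2: "card {z\<in>I. z < ?x} = l" using rank_sorted[OF fin l] .
    have "card {z\<in>K. z \<le> ?y} \<le> card {z\<in>I. z \<le> ?y}"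
    proof (cases "c \<le> ?y")
      case True
      have "{z\<in>K. z \<le> ?y} = insert c ({z\<in>I. z \<le> ?y} - {j})" using True Kd by auto
      moreover have "j \<in> {z\<in>I. z \<le> ?y}" using j jc True by auto
      moreover have "c \<notin> {z\<in>I. z \<le> ?y}" using c by simp
      ultimately show ?thesis using fin card_swap[of "{z\<in>I. z \<le> ?y}" j c] by simp
    next
      case False
      have "{z\<in>K. z \<le> ?y} \<subseteq> {z\<in>I. z \<le> ?y}" using False Kd by auto
      then show ?thesis using fin by (intro card_mono) auto
    qed
    also have "\<dots> \<le> card {z\<in>I. z < ?x}" using fin yx by (intro card_mono) auto
    finally show False using c1 c2 by simp
  qed
  then show ?thesis unfolding subset_le_def K_def[symmetric] using cardK by simp
qed


lemma plucker_zero_iff: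
  assumes ex: "\<exists>V. is_basis_of B vtx p (e p) (N p) V" and fin: "finite J" and cJ: "card J = e p"
  shows "plucker B vtx e N p J = 0 \<longleftrightarrow> (\<exists>u\<in>N p. u \<noteq> (\<lambda>b. 0) \<and> (\<forall>x\<in>J. u x = 0))"
proof -
  define V where "V = (SOME V. is_basis_of B vtx p (e p) (N p) V)"
  have bas: "is_basis_of B vtx p (e p) (N p) V" unfolding V_def using ex by (rule someI_ex)
  define L where "L = sorted_list_of_set J"
  have len: "length L = e p" unfolding L_def using cJ by simp
  have setL: "set L = J" unfolding L_def using fin by simp
  have m: "mat (e p) (e p) (\<lambda>(i, k). V i (L ! k)) =
      mat (e p) (e p) (\<lambda>(i,k). if k < length L then V i (L!k) else 0)"
    by (rule eq_matI) (auto simp: len)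
  have "plucker B vtx e N p J = det (mat (e p) (e p) (\<lambda>(i, k). V i (L ! k)))"
    unfolding plucker_def V_def L_def Let_def by simp
  also have "\<dots> = 0 \<longleftrightarrow> (\<exists>u\<in>N p. u \<noteq> (\<lambda>b. 0) \<and> (\<forall>k<length L. u (L!k) = 0))"
    unfolding m by (rule kernel_lemma[OF bas]) (simp add: len)
  also have "\<dots> \<longleftrightarrow> (\<exists>u\<in>N p. u \<noteq> (\<lambda>b. 0) \<and> (\<forall>x\<in>J. u x = 0))"
  proof -
    have "(\<forall>k<length L. u (L!k) = 0) \<longleftrightarrow> (\<forall>x\<in>J. u x = 0)" for u :: "'a \<Rightarrow> complex"
      by (auto simp: setL[symmetric] in_set_conv_nth) (metis nth_mem)
    then show ?thesis by simp
  qed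
  finally show ?thesis .
qed

lemma small_kernel:
  fixes S :: "'b::linorder set"
  assumes bas: "is_basis_of B vtx p d U V" and fin: "finite S" and cS: "card S < d"
  shows "\<exists>u\<in>U. u \<noteq> (\<lambda>b. 0) \<and> (\<forall>x\<in>S. u x = 0)"
proof -
  define L where "L = sorted_list_of_set S"
  have len: "length L = card S" unfolding L_def by simp
  have setL: "set L = S" unfolding L_def using fin by simp
  define A where "A = mat d d (\<lambda>(i,k). if k < length L then V i (L!k) else 0)"
  have A: "A \<in> carrier_mat d d" unfolding A_def by simp
  have "A *\<^sub>v unit_vec d (length L) = 0\<^sub>v d"
    by (rule eq_vecI) (use len cS in \<open>auto simp: A_def scalar_prod_def unit_vec_def intro!: sum.neutral\<close>)
  moreover have "(unit_vec d (length L) :: complex vec) \<noteq> 0\<^sub>v d"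
  proof
    assume "(unit_vec d (length L) :: complex vec) = 0\<^sub>v d"
    then have "(unit_vec d (length L) :: complex vec) $ length L = 0\<^sub>v d $ length L" by simp
    then show False using len cS by simp
  qed
  ultimately have "det A = 0"
    using det_0_iff_vec_prod_zero_field[OF A] unit_vec_carrier[of d "length L"] by blast
  then have "\<exists>u\<in>U. u \<noteq> (\<lambda>b. 0) \<and> (\<forall>k<length L. u (L!k) = 0)"
    using kernel_lemma[OF bas, of L] len cS unfolding A_def by simp
  then show ?thesis using setL by (metis in_set_conv_nth)
qed

lemma U_diff:
  assumes bas: "is_basis_of B vtx p d U V" and u: "u \<in> U" and w: "w \<in> U"
  shows "(\<lambda>b. u b - x * w b) \<in> U"
proof -
  from bas have Ueq: "U = {(\<lambda>b. \<Sum>i<d. c i * V i b) | c. True}" unfolding is_basis_of_def by auto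
  obtain cu where cu: "u = (\<lambda>b. \<Sum>i<d. cu i * V i b)" using u Ueq by blast
  obtain cw where cw: "w = (\<lambda>b. \<Sum>i<d. cw i * V i b)" using w Ueq by blast
  have "(\<lambda>b. u b - x * w b) = (\<lambda>b. \<Sum>i<d. (cu i - x * cw i) * V i b)"
    unfolding cu cw by (auto simp: sum_subtractf sum_distrib_left algebra_simps)
  then show ?thesis unfolding Ueq by (intro CollectI exI[of _ "\<lambda>i. cu i - x * cw i"]) simp
qed

lemma U_supp:
  assumes bas: "is_basis_of B vtx p d U V" and u: "u \<in> U" and x: "x \<notin> Bp B vtx p"
  shows "u x = 0"
proof -
  from bas have Ueq: "U = {(\<lambda>b. \<Sum>i<d. c i * V i b) | c. True}"
    and sup: "\<forall>i<d. \<forall>b. b \<notin> Bp B vtx p \<longrightarrow> V i b = 0" unfolding is_basis_of_def by auto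
  obtain cu where cu: "u = (\<lambda>b. \<Sum>i<d. cu i * V i b)" using u Ueq by blast
  show ?thesis unfolding cu using sup x by simp
qed

locale cellv =
  fixes U :: "('b::linorder \<Rightarrow> complex) set" and P I :: "'b set"
  assumes diff: "\<And>u w x. u \<in> U \<Longrightarrow> w \<in> U \<Longrightarrow> (\<lambda>b. u b - x * w b) \<in> U"
    and supp: "\<And>u x. u \<in> U \<Longrightarrow> x \<notin> P \<Longrightarrow> u x = 0"
    and finI: "finite I" and IP: "I \<subseteq> P"
    and small: "\<And>S. finite S \<Longrightarrow> card S < card I \<Longrightarrow> \<exists>u\<in>U. u \<noteq> (\<lambda>b. 0) \<and> (\<forall>x\<in>S. u x = 0)"
    and nz: "\<And>u. u \<in> U \<Longrightarrow> \<forall>x\<in>I. u x = 0 \<Longrightarrow> u = (\<lambda>b. 0)"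
    and van: "\<And>J. J \<subseteq> P \<Longrightarrow> card J = card I \<Longrightarrow> subset_le I J \<Longrightarrow> J \<noteq> I \<Longrightarrow>
               \<exists>u\<in>U. u \<noteq> (\<lambda>b. 0) \<and> (\<forall>x\<in>J. u x = 0)"
begin

lemma swap_vec:
  assumes j: "j \<in> I" and c: "c \<in> P" "c \<notin> I" and jc: "j < c"
  obtains u where "u \<in> U" "\<forall>x\<in>I - {j}. u x = 0" "u c = 0" "u j \<noteq> 0"
proof -
  let ?J = "insert c (I - {j})"
  have "\<exists>u\<in>U. u \<noteq> (\<lambda>b. 0) \<and> (\<forall>x\<in>?J. u x = 0)"
    by (rule van) (use IP c j finI card_swap[OF finI j c(2)] subset_le_swap[OF finI j c(2) jc] in auto)
  then obtain u where u: "u \<in> U" "u \<noteq> (\<lambda>b. 0)" "\<forall>x\<in>?J. u x = 0" by blast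
  have "u j \<noteq> 0"
  proof
    assume "u j = 0"
    then have "\<forall>x\<in>I. u x = 0" using u(3) by auto
    with nz u(1,2) show False by blast
  qed
  with u that show ?thesis by auto
qed

lemma F2:
  assumes j: "j \<in> I" and c: "c \<in> P" "c \<notin> I" and jc: "j < c"
    and u: "u \<in> U" "\<forall>x\<in>I - {j}. u x = 0"
  shows "u c = 0"
proof -
  obtain u' where u': "u' \<in> U" "\<forall>x\<in>I - {j}. u' x = 0" "u' c = 0" "u' j \<noteq> 0"
    using swap_vec[OF j c jc] by blast
  define w where "w = (\<lambda>b. u b - (u j / u' j) * u' b)"
  have "w \<in> U" unfolding w_def by (rule diff[OF u(1) u'(1)])
  moreover have "\<forall>x\<in>I. w x = 0"
  proof
    fix x assume "x \<in> I"
    then show "w x = 0" using u(2) u'(2,4) unfolding w_def by (cases "x = j") auto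
  qed
  ultimately have "w = (\<lambda>b. 0)" by (rule nz)
  then have "w c = 0" by simp
  then show ?thesis unfolding w_def using u'(3) by simp
qed

lemma F3:
  assumes c: "c \<in> P" "c \<notin> I" and w: "w \<in> U" "\<forall>x\<in>P. c < x \<longrightarrow> w x = 0"
  shows "w c = 0"
  using w
proof (induction "card {j\<in>I. w j \<noteq> 0}" arbitrary: w rule: less_induct)
  case less
  show ?case
  proof (cases "{j\<in>I. w j \<noteq> 0} = {}")
    case True
    then have "w = (\<lambda>b. 0)" using nz[OF less.prems(1)] by auto
    then show ?thesis by simp
  next
    case False
    then obtain j where j: "j \<in> I" "w j \<noteq> 0" by auto
    have "j < c"
    proof -
      have "\<not> c < j" using less.prems(2) j IP by auto
      moreover have "j \<noteq> c" using j c by auto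
      ultimately show ?thesis by simp
    qed
    obtain u' where u': "u' \<in> U" "\<forall>x\<in>I - {j}. u' x = 0" "u' c = 0" "u' j \<noteq> 0"
      using swap_vec[OF j(1) c \<open>j < c\<close>] by blast
    have above: "u' x = 0" if "x \<in> P" "c < x" for x
    proof (cases "x \<in> I")
      case True
      then show ?thesis using u'(2) that \<open>j < c\<close> by auto
    next
      case False
      show ?thesis by (rule F2[OF j(1) that(1) False]) (use that \<open>j < c\<close> u' in auto)
    qed
    define w' where "w' = (\<lambda>b. w b - (w j / u' j) * u' b)"
    have w'U: "w' \<in> U" unfolding w'_def by (rule diff[OF less.prems(1) u'(1)])
    have w'a: "\<forall>x\<in>P. c < x \<longrightarrow> w' x = 0" using less.prems(2) above unfolding w'_def by auto
    have sub: "{j\<in>I. w' j \<noteq> 0} \<subset> {j\<in>I. w j \<noteq> 0}"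
    proof
      show "{j\<in>I. w' j \<noteq> 0} \<subseteq> {j\<in>I. w j \<noteq> 0}" using u'(2,4) unfolding w'_def by auto
      have "w' j = 0" unfolding w'_def using u'(4) by simp
      then show "{j\<in>I. w' j \<noteq> 0} \<noteq> {j\<in>I. w j \<noteq> 0}" using j by blast
    qed
    have "card {j\<in>I. w' j \<noteq> 0} < card {j\<in>I. w j \<noteq> 0}"
      using sub finI by (intro psubset_card_mono) auto
    then have "w' c = 0" using less.hyps w'U w'a by blast
    then show ?thesis unfolding w'_def using u'(3) by simp
  qed
qed

lemma exist_lead:
  assumes b: "b \<in> I"
  obtains v where "v \<in> U" "v b \<noteq> 0" "\<forall>x\<in>P. b < x \<longrightarrow> v x = 0"
proof -
  have "card (I - {b}) < card I" using b finI by (meson card_Diff1_less)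
  then obtain u where u: "u \<in> U" "u \<noteq> (\<lambda>b. 0)" "\<forall>x\<in>I - {b}. u x = 0"
    using small[of "I - {b}"] finI by auto
  have ub: "u b \<noteq> 0"
  proof
    assume "u b = 0"
    then have "\<forall>x\<in>I. u x = 0" using u(3) by auto
    with nz u(1,2) show False by blast
  qed
  have "u x = 0" if "x \<in> P" "b < x" for x
  proof (cases "x \<in> I")
    case True then show ?thesis using u(3) that by auto
  next
    case False then show ?thesis using F2[OF b that(1) False that(2) u(1) u(3)] by simp
  qed
  with u(1) ub that show ?thesis by blast
qed

end


lemma cell_interp:
  assumes N: "N \<in> schubert_cell Q0 Q1 s t B vtx coef e \<beta>" and p: "p \<in> Q0"
    and ty: "of_type Q0 B vtx e \<beta>" and finB: "finite B"
  shows "cellv (N p) (Bp B vtx p) (\<beta> \<inter> Bp B vtx p)"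
proof -
  have NG: "N \<in> quiver_grassmannian Q0 Q1 s t B vtx coef e" using N unfolding schubert_cell_def by simp
  then have ex: "\<exists>V. is_basis_of B vtx p (e p) (N p) V" using p unfolding quiver_grassmannian_def by simp
  then obtain V where bas: "is_basis_of B vtx p (e p) (N p) V" by blast
  let ?I = "\<beta> \<inter> Bp B vtx p"
  have finI: "finite ?I" using ty finB unfolding of_type_def by (meson finite_Int finite_subset)
  have cI: "card ?I = e p" using ty p unfolding of_type_def by simp
  have finP: "finite (Bp B vtx p)" using finB unfolding Bp_def by simp
  have cond: "plucker B vtx e N p ?I \<noteq> 0 \<and>
          (\<forall>J. J \<subseteq> Bp B vtx p \<and> card J = e p \<and> subset_le ?I J \<and> J \<noteq> ?I
               \<longrightarrow> plucker B vtx e N p J = 0)" using N p unfolding schubert_cell_def by simp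
  show ?thesis
  proof
    show "\<And>u w x. u \<in> N p \<Longrightarrow> w \<in> N p \<Longrightarrow> (\<lambda>b. u b - x * w b) \<in> N p"
      using U_diff[OF bas] by blast
    show "\<And>u x. u \<in> N p \<Longrightarrow> x \<notin> Bp B vtx p \<Longrightarrow> u x = 0"
      using U_supp[OF bas] by blast
    show "finite ?I" by (rule finI)
    show "?I \<subseteq> Bp B vtx p" by simp
    show "\<And>S. finite S \<Longrightarrow> card S < card ?I \<Longrightarrow> \<exists>u\<in>N p. u \<noteq> (\<lambda>b. 0) \<and> (\<forall>x\<in>S. u x = 0)"
      using small_kernel[OF bas] cI by simp
    show "\<And>u. u \<in> N p \<Longrightarrow> \<forall>x\<in>?I. u x = 0 \<Longrightarrow> u = (\<lambda>b. 0)"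
      using cond plucker_zero_iff[of B vtx p e N, OF ex finI cI] by blast
    show "\<And>J. J \<subseteq> Bp B vtx p \<Longrightarrow> card J = card ?I \<Longrightarrow> subset_le ?I J \<Longrightarrow> J \<noteq> ?I \<Longrightarrow>
               \<exists>u\<in>N p. u \<noteq> (\<lambda>b. 0) \<and> (\<forall>x\<in>J. u x = 0)"
    proof -
      fix J assume J: "J \<subseteq> Bp B vtx p" "card J = card ?I" "subset_le ?I J" "J \<noteq> ?I"
      have fJ: "finite J" using J(1) finP by (rule finite_subset)
      have "plucker B vtx e N p J = 0" using cond J cI by simp
      then show "\<exists>u\<in>N p. u \<noteq> (\<lambda>b. 0) \<and> (\<forall>x\<in>J. u x = 0)"
        using plucker_zero_iff[of B vtx p e N, OF ex fJ] J(2) cI by simp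
    qed
  qed
qed

theorem lemma3p1:
  fixes Q0 :: "'v set" and Q1 :: "'a set" and s t :: "'a \<Rightarrow> 'v"
    and B :: "'b::linorder set" and vtx :: "'b \<Rightarrow> 'v"
    and coef :: "'a \<Rightarrow> 'b \<Rightarrow> 'b \<Rightarrow> complex"
    and e :: "'v \<Rightarrow> nat" and \<beta> :: "'b set"
  assumes "finite Q0" and "finite Q1"
    and "\<forall>a\<in>Q1. s a \<in> Q0 \<and> t a \<in> Q0"
    and "finite B" and "\<forall>b\<in>B. vtx b \<in> Q0"
    and "of_type Q0 B vtx e \<beta>"
    and "\<not> ext_succ_closed Q1 s t B vtx coef \<beta>"
  shows "schubert_cell Q0 Q1 s t B vtx coef e \<beta> = {}"
proof (rule ccontr)
  assume "schubert_cell Q0 Q1 s t B vtx coef e \<beta> \<noteq> {}"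
  then obtain N where N: "N \<in> schubert_cell Q0 Q1 s t B vtx coef e \<beta>" by blast
  obtain b a c where ext: "extremal_arrow Q1 s t B vtx coef (b, a, c)" and b\<beta>: "b \<in> \<beta>" and c\<beta>: "c \<notin> \<beta>"
    using assms(7) unfolding ext_succ_closed_def by auto
  have arr: "(b, a, c) \<in> coeff_quiver_arrows Q1 s t B vtx coef"
    and extr: "\<And>b' x. (b', a, x) \<in> coeff_quiver_arrows Q1 s t B vtx coef \<Longrightarrow> (b', a, x) \<noteq> (b, a, c)
        \<Longrightarrow> b < b' \<or> x < c"
    using ext unfolding extremal_arrow_def by force+
  have aQ: "a \<in> Q1" and bP: "b \<in> Bp B vtx (s a)" and cP: "c \<in> Bp B vtx (t a)" and cf: "coef a b c \<noteq> 0"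
    using arr unfolding coeff_quiver_arrows_def by auto
  have sQ: "s a \<in> Q0" and tQ: "t a \<in> Q0" using assms(3) aQ by auto
  interpret P: cellv "N (s a)" "Bp B vtx (s a)" "\<beta> \<inter> Bp B vtx (s a)"
    by (rule cell_interp[OF N sQ assms(6) assms(4)])
  interpret T: cellv "N (t a)" "Bp B vtx (t a)" "\<beta> \<inter> Bp B vtx (t a)"
    by (rule cell_interp[OF N tQ assms(6) assms(4)])
  obtain v where v: "v \<in> N (s a)" "v b \<noteq> 0" "\<forall>x\<in>Bp B vtx (s a). b < x \<longrightarrow> v x = 0"
    using P.exist_lead[of b] b\<beta> bP by blast
  have NG: "N \<in> quiver_grassmannian Q0 Q1 s t B vtx coef e" using N unfolding schubert_cell_def by simp
  define w where "w = rep_map B vtx s t coef a v"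
  have wN: "w \<in> N (t a)" using NG aQ v(1) unfolding quiver_grassmannian_def w_def by blast
  have finS: "finite (Bp B vtx (s a))" using assms(4) unfolding Bp_def by simp
  have term0: "coef a b' x * v b' = 0"
    if "b' \<in> Bp B vtx (s a)" "x \<in> Bp B vtx (t a)" "(b', x) \<noteq> (b, c)" "c \<le> x" for b' x
  proof (cases "coef a b' x = 0")
    case False
    then have "(b', a, x) \<in> coeff_quiver_arrows Q1 s t B vtx coef"
      using aQ that unfolding coeff_quiver_arrows_def by auto
    then have "b < b' \<or> x < c" using extr that(3) by auto
    then have "b < b'" using that(4) by auto
    then show ?thesis using v(3) that(1) by simp
  qed simp
  have wc: "w c = coef a b c * v b"
  proof -
    have "w c = (\<Sum>b'\<in>Bp B vtx (s a). coef a b' c * v b')"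
      unfolding w_def rep_map_def using cP by simp
    also have "\<dots> = coef a b c * v b + (\<Sum>b'\<in>Bp B vtx (s a) - {b}. coef a b' c * v b')"
      by (rule sum.remove[OF finS bP])
    also have "(\<Sum>b'\<in>Bp B vtx (s a) - {b}. coef a b' c * v b') = 0"
      by (rule sum.neutral) (use term0 cP in auto)
    finally show ?thesis by simp
  qed
  have wa: "\<forall>x\<in>Bp B vtx (t a). c < x \<longrightarrow> w x = 0"
  proof (intro ballI impI)
    fix x assume x: "x \<in> Bp B vtx (t a)" "c < x"
    have "w x = (\<Sum>b'\<in>Bp B vtx (s a). coef a b' x * v b')"
      unfolding w_def rep_map_def using x by simp
    also have "\<dots> = 0"
    proof (rule sum.neutral, rule ballI)
      fix b' assume "b' \<in> Bp B vtx (s a)"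
      moreover have "(b', x) \<noteq> (b, c)" "c \<le> x" using x by auto
      ultimately show "coef a b' x * v b' = 0" using term0[of b' x] x by blast
    qed
    finally show "w x = 0" .
  qed
  have "w c = 0" by (rule T.F3) (use cP c\<beta> wN wa in auto)
  with wc cf v(2) show False by simp
qed

end
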